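(* Let $p\in(0,1)$, $a>a_*:=p^p(1-p)^{1-p}$, and let $\gamma_a:\mathbb{R}\to\mathbb{S}^2$ be a $p$-elastic curve with non-constant curvature $\kappa$ satisfying the first integral with constant $a$ (so $\kappa$ is periodic with some minimal period $\varrho=\varrho(a)>0$). Then $\gamma_a$ is a closed curve if and only if $$\Lambda_p(a):=(1-p)\sqrt{a}\int_0^{\varrho}\frac{\kappa^{2-p}}{a\,\kappa^{2(1-p)}-p^2}\,ds=2\pi q$$ for some rational number $q$.
   Context: $\mathbb{S}^2$ is the unit sphere in $\mathbb{R}^3$. For an immersed arc-length parametrized curve $\gamma$ in $\mathbb{S}^2$, $T=\gamma'$, $N$ is the rotation of $T$ by $+\pi/2$ in the tangent plane, and the geodesic curvature $\kappa$ is defined by $\nabla_T T=\kappa N$. For $p\in(0,1)$, $\mathbf{\Theta}_p(\gamma)=\int_\gamma\kappa^p\,ds$ acts on convex curves ($\kappa>0$), and a $p$-elastic curve is a convex curve whose curvature satisfies $p\,(\kappa^{p-1})''+(p-1)\kappa^{p+1}+p\,\kappa^{p-1}=0$. A $p$-elastic curve with non-constant curvature satisfies, for a constant $a$, the first integral $p^2(p-1)^2\kappa^{2(p-2)}(\kappa')^2+(p-1)^2\kappa^{2p}+p^2\kappa^{2(p-1)}=a$; for $p\in(0,1)$ non-constant solutions require $a>a_*$, and such curves are defined on all of $\mathbb{R}$ with periodic curvature. *)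

theory Defs
  imports "HOL-Analysis.Analysis"
begin

definition tangent :: "(real \<Rightarrow> real^3) \<Rightarrow> real \<Rightarrow> real^3" where
  "tangent \<gamma> s = vector_derivative \<gamma> (at s)"

text \<open>N = rotation of T by +pi/2 in the tangent plane at gamma(s), i.e. N = gamma x T.
  nabla_T T is the tangential part of T'; kappa = <nabla_T T, N> = <T', gamma x T>.\<close>

definition normal :: "(real \<Rightarrow> real^3) \<Rightarrow> real \<Rightarrow> real^3" where
  "normal \<gamma> s = cross3 (\<gamma> s) (tangent \<gamma> s)"

definition cov_accel :: "(real \<Rightarrow> real^3) \<Rightarrow> real \<Rightarrow> real^3" where
  "cov_accel \<gamma> s = vector_derivative (tangent \<gamma>) (at s)
      - (vector_derivative (tangent \<gamma>) (at s) \<bullet> \<gamma> s) *\<^sub>R \<gamma> s"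

definition geod_curv :: "(real \<Rightarrow> real^3) \<Rightarrow> real \<Rightarrow> real" where
  "geod_curv \<gamma> s = cov_accel \<gamma> s \<bullet> normal \<gamma> s"

definition arclength_sphere_curve :: "(real \<Rightarrow> real^3) \<Rightarrow> bool" where
  "arclength_sphere_curve \<gamma> \<longleftrightarrow>
     (\<forall>s. norm (\<gamma> s) = 1) \<and> (\<forall>s. \<gamma> differentiable (at s)) \<and>
     (\<forall>s. norm (tangent \<gamma> s) = 1) \<and> (\<forall>s. tangent \<gamma> differentiable (at s))"

definition p_elastic :: "real \<Rightarrow> (real \<Rightarrow> real^3) \<Rightarrow> bool" where
  "p_elastic p \<gamma> \<longleftrightarrow> arclength_sphere_curve \<gamma> \<and>
     (\<forall>s. geod_curv \<gamma> s > 0) \<and>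
     (\<forall>s. (\<lambda>t. geod_curv \<gamma> t powr (p - 1)) differentiable (at s)) \<and>
     (\<forall>s. deriv (\<lambda>t. geod_curv \<gamma> t powr (p - 1)) differentiable (at s)) \<and>
     (\<forall>s. p * deriv (deriv (\<lambda>t. geod_curv \<gamma> t powr (p - 1))) s
          + (p - 1) * geod_curv \<gamma> s powr (p + 1) + p * geod_curv \<gamma> s powr (p - 1) = 0)"

definition closed_curve :: "(real \<Rightarrow> real^3) \<Rightarrow> bool" where
  "closed_curve \<gamma> \<longleftrightarrow> (\<exists>L>0. \<forall>s. \<gamma> (s + L) = \<gamma> s)"

definition minimal_period :: "(real \<Rightarrow> real) \<Rightarrow> real \<Rightarrow> bool" where
  "minimal_period f \<rho> \<longleftrightarrow> \<rho> > 0 \<and> (\<forall>s. f (s + \<rho>) = f s) \<and>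
     (\<forall>t. 0 < t \<and> t < \<rho> \<longrightarrow> \<not> (\<forall>s. f (s + t) = f s))"

definition Lambda_p :: "real \<Rightarrow> real \<Rightarrow> (real \<Rightarrow> real) \<Rightarrow> real \<Rightarrow> real" where
  "Lambda_p p a \<kappa> \<rho> = (1 - p) * sqrt a *
     integral {0..\<rho>} (\<lambda>s. \<kappa> s powr (2 - p) / (a * \<kappa> s powr (2 * (1 - p)) - p\<^sup>2))"

end

theory Submission
  imports Defs
begin
unbundle cross3_syntax


lemma frame_decomp:
  fixes g t v :: "real^3"
  assumes g: "norm g = 1" and t: "norm t = 1" and gt: "g \<bullet> t = 0"
  shows "v = (v \<bullet> g) *\<^sub>R g + (v \<bullet> t) *\<^sub>R t + (v \<bullet> (g \<times> t)) *\<^sub>R (g \<times> t)"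
proof -
  define N where "N = g \<times> t"
  have gg: "g \<bullet> g = 1" using g by (simp add: dot_square_norm)
  have tt: "t \<bullet> t = 1" using t by (simp add: dot_square_norm)
  have NN: "N \<bullet> N = 1"
    using norm_cross_dot[of g t] g t gt by (simp add: N_def dot_square_norm power2_eq_square)
  have Ng: "N \<times> g = t" unfolding N_def
    using Lagrange[of g g t] gg gt cross_skew[of "g \<times> t" g] by simp
  have Nt: "N \<times> t = - g" unfolding N_def
    using Lagrange[of t g t] tt gt cross_skew[of "g \<times> t" t] by (simp add: inner_commute)
  have 1: "N \<times> (v \<times> N) = v - (N \<bullet> v) *\<^sub>R N"
    using Lagrange[of N v N] NN by simp
  have 2: "v \<times> N = (v \<bullet> t) *\<^sub>R g - (v \<bullet> g) *\<^sub>R t"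
    unfolding N_def using Lagrange[of v g t] by simp
  have 3: "N \<times> (v \<times> N) = (v \<bullet> t) *\<^sub>R t + (v \<bullet> g) *\<^sub>R g"
    unfolding 2 by (simp add: Cross3.right_diff_distrib cross_mult_right Ng Nt)
  show ?thesis using 1 3 unfolding N_def[symmetric] by (simp add: inner_commute algebra_simps)
qed



lemma vd_const_zero:
  fixes f :: "real \<Rightarrow> 'a::real_normed_vector"
  assumes "\<And>s. f s = c" "(f has_vector_derivative D) (at x)"
  shows "D = 0"
proof -
  have "f = (\<lambda>_. c)" using assms(1) by auto
  then show ?thesis using assms(2) vector_derivative_unique_at has_vector_derivative_const by metis
qed

lemma inner_const_deriv:
  fixes f :: "real \<Rightarrow> real^3"
  assumes "\<And>s. f s \<bullet> f s = c" "(f has_vector_derivative D) (at x)"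
  shows "f x \<bullet> D = 0"
proof -
  have "((\<lambda>s. f s \<bullet> f s) has_vector_derivative (f x \<bullet> D + D \<bullet> f x)) (at x)"
    using bounded_bilinear.has_vector_derivative[OF bounded_bilinear_inner assms(2) assms(2)] .
  then have "f x \<bullet> D + D \<bullet> f x = 0" using vd_const_zero[of "\<lambda>s. f s \<bullet> f s" c] assms(1) by blast
  then show ?thesis by (simp add: inner_commute)
qed

lemma shift_vd:
  fixes f :: "real \<Rightarrow> 'a::real_normed_vector"
  assumes "(f has_vector_derivative D) (at (x + L))"
  shows "((\<lambda>t. f (t + L)) has_vector_derivative D) (at x)"
proof -
  have 1: "((\<lambda>t. t + L) has_vector_derivative 1) (at x)"
    by (auto intro!: derivative_eq_intros)
  from vector_diff_chain_at[OF 1, of f D] assms show ?thesis by (simp add: o_def)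
qed

lemma periodic_vd:
  fixes f :: "real \<Rightarrow> 'a::real_normed_vector"
  assumes "\<And>s. f (s + L) = f s" "\<And>s. f differentiable (at s)"
  shows "vector_derivative f (at (s + L)) = vector_derivative f (at s)"
proof -
  have "(f has_vector_derivative vector_derivative f (at (s + L))) (at (s + L))"
    using assms(2) vector_derivative_works by blast
  from shift_vd[OF this] have "(f has_vector_derivative vector_derivative f (at (s + L))) (at s)"
    using assms(1) by simp
  then show ?thesis using vector_derivative_at by metis
qed



context
  fixes \<gamma> :: "real \<Rightarrow> real^3"
  assumes arc: "arclength_sphere_curve \<gamma>"
begin

lemma g_der: "(\<gamma> has_vector_derivative tangent \<gamma> s) (at s)"
  using arc unfolding arclength_sphere_curve_def tangent_def
  using vector_derivative_works by blast

lemma T_der: "(tangent \<gamma> has_vector_derivative vector_derivative (tangent \<gamma>) (at s)) (at s)"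
  using arc unfolding arclength_sphere_curve_def
  using vector_derivative_works by blast

lemma gg: "\<gamma> s \<bullet> \<gamma> s = 1"
  using arc unfolding arclength_sphere_curve_def by (simp add: dot_square_norm)

lemma TT: "tangent \<gamma> s \<bullet> tangent \<gamma> s = 1"
  using arc unfolding arclength_sphere_curve_def by (simp add: dot_square_norm)

lemma gT: "\<gamma> s \<bullet> tangent \<gamma> s = 0"
  using inner_const_deriv[of \<gamma> 1, OF gg g_der] .

lemma TA: "tangent \<gamma> s \<bullet> vector_derivative (tangent \<gamma>) (at s) = 0"
  using inner_const_deriv[of "tangent \<gamma>" 1, OF TT T_der] .

lemma gA: "\<gamma> s \<bullet> vector_derivative (tangent \<gamma>) (at s) = -1"
proof -
  have "((\<lambda>s. \<gamma> s \<bullet> tangent \<gamma> s) has_vector_derivative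
     (\<gamma> s \<bullet> vector_derivative (tangent \<gamma>) (at s) + tangent \<gamma> s \<bullet> tangent \<gamma> s)) (at s)"
    using bounded_bilinear.has_vector_derivative[OF bounded_bilinear_inner g_der T_der] .
  then have "\<gamma> s \<bullet> vector_derivative (tangent \<gamma>) (at s) + tangent \<gamma> s \<bullet> tangent \<gamma> s = 0"
    using vd_const_zero[of "\<lambda>s. \<gamma> s \<bullet> tangent \<gamma> s" 0] gT by blast
  then show ?thesis using TT by simp
qed

lemma gN: "\<gamma> s \<bullet> normal \<gamma> s = 0" and TN: "tangent \<gamma> s \<bullet> normal \<gamma> s = 0"
  unfolding normal_def by (simp_all add: dot_cross_self)

lemma NN: "normal \<gamma> s \<bullet> normal \<gamma> s = 1"
proof -
  have "(norm (normal \<gamma> s))\<^sup>2 = 1"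
    using norm_cross_dot[of "\<gamma> s" "tangent \<gamma> s"] gT[of s]
    by (simp add: normal_def) (metis TT gg norm_eq_1 dot_square_norm power2_eq_square mult_1)
  then show ?thesis by (simp add: dot_square_norm)
qed

lemma kappa_eq: "geod_curv \<gamma> s = vector_derivative (tangent \<gamma>) (at s) \<bullet> normal \<gamma> s"
  unfolding geod_curv_def cov_accel_def by (simp add: inner_diff_left gN)

lemma A_eq: "vector_derivative (tangent \<gamma>) (at s) = - \<gamma> s + geod_curv \<gamma> s *\<^sub>R normal \<gamma> s"
proof -
  have n1: "norm (\<gamma> s) = 1" "norm (tangent \<gamma> s) = 1"
    using arc unfolding arclength_sphere_curve_def by auto
  from frame_decomp[OF n1 gT, of "vector_derivative (tangent \<gamma>) (at s)"]
  show ?thesis using gA[of s] TA[of s] kappa_eq[of s]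
    by (simp add: inner_commute normal_def)
qed

lemma N_der: "(normal \<gamma> has_vector_derivative (- geod_curv \<gamma> s *\<^sub>R tangent \<gamma> s)) (at s)"
proof -
  have bb: "bounded_bilinear cross3" using bilinear_cross bilinear_conv_bounded_bilinear by blast
  have "((\<lambda>s. \<gamma> s \<times> tangent \<gamma> s) has_vector_derivative
     (\<gamma> s \<times> vector_derivative (tangent \<gamma>) (at s) + tangent \<gamma> s \<times> tangent \<gamma> s)) (at s)"
    using bounded_bilinear.has_vector_derivative[OF bb g_der T_der] .
  moreover have "\<gamma> s \<times> vector_derivative (tangent \<gamma>) (at s) + tangent \<gamma> s \<times> tangent \<gamma> s
      = - geod_curv \<gamma> s *\<^sub>R tangent \<gamma> s"
    unfolding A_eq normal_def
    using Lagrange[of "\<gamma> s" "\<gamma> s" "tangent \<gamma> s"] gT[of s] gg[of s]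
    by (simp add: cross_add_right cross_mult_right Cross3.right_diff_distrib)
  ultimately show ?thesis unfolding normal_def[abs_def] by simp
qed

end


context
  fixes k :: "real \<Rightarrow> real" and p :: real
  assumes kpos: "\<And>s. k s > 0" and p1: "p < 1"
    and wd: "\<And>s. (\<lambda>t. k t powr (p - 1)) differentiable (at s)"
begin

lemma w_der: "DERIV (\<lambda>t. k t powr (p - 1)) s :> deriv (\<lambda>t. k t powr (p - 1)) s"
  using wd DERIV_deriv_iff_real_differentiable by blast

lemma k_fun: "k = (\<lambda>t. (k t powr (p - 1)) powr (1 / (p - 1)))"
proof
  fix t show "k t = (k t powr (p - 1)) powr (1 / (p - 1))"
    using kpos[of t] p1 by (simp add: powr_powr)
qed

definition "Kd s = (1 / (p - 1)) * (k s powr (p - 1)) powr (1 / (p - 1) - 1) * deriv (\<lambda>t. k t powr (p - 1)) s"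

lemma k_der: "DERIV k s :> Kd s"
proof -
  have "DERIV (\<lambda>t. (k t powr (p - 1)) powr (1 / (p - 1))) s :> Kd s"
    using DERIV_fun_powr[OF w_der[of s], of "1 / (p - 1)"] kpos[of s]
    by (simp add: Kd_def)
  then show ?thesis using k_fun by metis
qed

lemma k_deriv: "deriv k s = Kd s"
  using k_der DERIV_imp_deriv by blast

lemma k_cont: "isCont k s"
  using k_der DERIV_isCont by blast

lemma w1_eq: "deriv (\<lambda>t. k t powr (p - 1)) s = (p - 1) * k s powr (p - 2) * Kd s"
proof -
  have "DERIV (\<lambda>t. k t powr (p - 1)) s :> (p - 1) * k s powr (p - 1 - 1) * Kd s"
    using DERIV_fun_powr[OF k_der kpos[of s], of "p - 1"] by simp
  then have "DERIV (\<lambda>t. k t powr (p - 1)) s :> (p - 1) * k s powr (p - 2) * Kd s" by (simp add: algebra_simps)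
  then show ?thesis using w_der DERIV_unique by blast
qed

lemma kp_der: "DERIV (\<lambda>t. k t powr p) s :> p * k s powr (p - 1) * Kd s"
  using DERIV_fun_powr[OF k_der kpos[of s], of p] by simp

end


locale elastic =
  fixes p a :: real and \<gamma> :: "real \<Rightarrow> real^3"
  assumes p0: "0 < p" and p1: "p < 1"
    and el: "p_elastic p \<gamma>"
    and fi: "\<forall>s. p\<^sup>2 * (p - 1)\<^sup>2 * geod_curv \<gamma> s powr (2 * (p - 2)) * (deriv (geod_curv \<gamma>) s)\<^sup>2
            + (p - 1)\<^sup>2 * geod_curv \<gamma> s powr (2 * p) + p\<^sup>2 * geod_curv \<gamma> s powr (2 * (p - 1)) = a"
begin

abbreviation "\<kappa> \<equiv> geod_curv \<gamma>"
abbreviation "T \<equiv> tangent \<gamma>"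
abbreviation "N \<equiv> normal \<gamma>"
abbreviation "w \<equiv> (\<lambda>t. \<kappa> t powr (p - 1))"
abbreviation "w1 \<equiv> deriv w"
abbreviation "w2 \<equiv> deriv w1"
abbreviation "K \<equiv> Kd \<kappa> p"

lemma arc: "arclength_sphere_curve \<gamma>" using el unfolding p_elastic_def by blast
lemma kpos: "\<kappa> s > 0" using el unfolding p_elastic_def by blast
lemma wd: "w differentiable (at s)" using el unfolding p_elastic_def by blast
lemma w1d: "w1 differentiable (at s)" using el unfolding p_elastic_def by blast
lemma EL: "p * w2 s + (p - 1) * \<kappa> s powr (p + 1) + p * \<kappa> s powr (p - 1) = 0"
  using el unfolding p_elastic_def by blast

lemma w_der': "DERIV w s :> w1 s" using wd DERIV_deriv_iff_real_differentiable by blast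
lemma w1_der: "DERIV w1 s :> w2 s" using w1d DERIV_deriv_iff_real_differentiable by blast

lemmas kfacts = k_der[of \<kappa>, OF kpos p1 wd] k_deriv[of \<kappa>, OF kpos p1 wd]
  k_cont[of \<kappa>, OF kpos p1 wd] w1_eq[of \<kappa>, OF kpos p1 wd] kp_der[of \<kappa>, OF kpos p1 wd]

definition "c s = (1 - p) * \<kappa> s powr p"
definition "J s = (p * w s) *\<^sub>R \<gamma> s + (p * w1 s) *\<^sub>R T s + c s *\<^sub>R N s"

lemma J_der: "(J has_vector_derivative 0) (at s)"
proof -
  have c_der: "DERIV c s :> (1 - p) * (p * \<kappa> s powr (p - 1) * K s)"
    unfolding c_def[abs_def] by (intro DERIV_cmult kfacts(5))
  have pw: "DERIV (\<lambda>t. p * w t) s :> p * w1 s" by (intro DERIV_cmult w_der')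
  have pw1: "DERIV (\<lambda>t. p * w1 t) s :> p * w2 s" by (intro DERIV_cmult w1_der)
  have "(J has_vector_derivative
     ((p * w s) *\<^sub>R T s + (p * w1 s) *\<^sub>R \<gamma> s)
     + ((p * w1 s) *\<^sub>R vector_derivative T (at s) + (p * w2 s) *\<^sub>R T s)
     + (c s *\<^sub>R (- \<kappa> s *\<^sub>R T s) + ((1 - p) * (p * \<kappa> s powr (p - 1) * K s)) *\<^sub>R N s)) (at s)"
    unfolding J_def[abs_def]
    by (intro has_vector_derivative_add has_vector_derivative_scaleR pw pw1 c_der
        g_der[OF arc] T_der[OF arc] N_der[OF arc])
  moreover have "((p * w s) *\<^sub>R T s + (p * w1 s) *\<^sub>R \<gamma> s)
     + ((p * w1 s) *\<^sub>R vector_derivative T (at s) + (p * w2 s) *\<^sub>R T s)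
     + (c s *\<^sub>R (- \<kappa> s *\<^sub>R T s) + ((1 - p) * (p * \<kappa> s powr (p - 1) * K s)) *\<^sub>R N s)
     = (p * w s + p * w2 s - c s * \<kappa> s) *\<^sub>R T s
       + (p * w1 s * \<kappa> s + (1 - p) * (p * \<kappa> s powr (p - 1) * K s)) *\<^sub>R N s"
    unfolding A_eq[OF arc] by (simp add: algebra_simps)
  moreover have "p * w s + p * w2 s - c s * \<kappa> s = 0"
  proof -
    have "\<kappa> s powr p * \<kappa> s = \<kappa> s powr (p + 1)" using kpos[of s] by (simp add: powr_add)
    then show ?thesis using EL[of s] unfolding c_def by (simp add: algebra_simps)
  qed
  moreover have "p * w1 s * \<kappa> s + (1 - p) * (p * \<kappa> s powr (p - 1) * K s) = 0"
  proof -
    have "\<kappa> s powr (p - 2) * \<kappa> s = \<kappa> s powr (p - 1)" using kpos[of s]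
      using powr_add[of "\<kappa> s" "p - 2" 1] by simp
    then have e: "w1 s * \<kappa> s = (p - 1) * K s * w s"
      unfolding kfacts(4) by (simp add: mult_ac)
    have "p * w1 s * \<kappa> s = p * ((p - 1) * K s * w s)" using e by (simp add: mult.assoc)
    then show ?thesis by (simp add: algebra_simps)
  qed
  ultimately show ?thesis by simp
qed

end


lemma powr_2mult: "(x::real) > 0 \<Longrightarrow> x powr (2 * r) = (x powr r)\<^sup>2"
  by (simp add: power2_eq_square powr_add[symmetric])

context elastic
begin

lemma J_const: "J s = J 0"
proof -
  have h: "(J has_derivative (\<lambda>h. 0)) (at x)" for x
    using J_der[of x] unfolding has_vector_derivative_def by simp
  have "\<exists>c. \<forall>x\<in>UNIV. J x = c"
    by (rule has_derivative_zero_constant[OF convex_UNIV]) (rule h)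
  then show ?thesis by auto
qed

definition "J0 = J 0"

lemmas orth0 = gg[OF arc] TT[OF arc] gT[OF arc] gN[OF arc] TN[OF arc] NN[OF arc]
lemma orthc: "T s \<bullet> \<gamma> s = 0" "N s \<bullet> \<gamma> s = 0" "N s \<bullet> T s = 0"
  using orth0 by (simp_all add: inner_commute)
lemmas orth = orth0 orthc

lemma Jg: "J0 \<bullet> \<gamma> s = p * w s"
proof -
  have "J0 = J s" using J_const[of s] J0_def by simp
  then show ?thesis unfolding J_def using orth by (simp add: inner_add_left)
qed
lemma JT: "J0 \<bullet> T s = p * w1 s"
proof -
  have "J0 = J s" using J_const[of s] J0_def by simp
  then show ?thesis unfolding J_def using orth by (simp add: inner_add_left)
qed
lemma JN: "J0 \<bullet> N s = c s"
proof -
  have "J0 = J s" using J_const[of s] J0_def by simp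
  then show ?thesis unfolding J_def using orth by (simp add: inner_add_left)
qed
lemma JJ: "J0 \<bullet> J0 = (p * w s)\<^sup>2 + (p * w1 s)\<^sup>2 + (c s)\<^sup>2"
proof -
  have "J0 \<bullet> J0 = J0 \<bullet> J s" using J_const[of s] J0_def by simp
  also have "\<dots> = (p * w s)\<^sup>2 + (p * w1 s)\<^sup>2 + (c s)\<^sup>2"
    unfolding J_def by (simp add: inner_add_right Jg JT JN power2_eq_square)
  finally show ?thesis .
qed

lemma cpos: "c s > 0" unfolding c_def using p1 kpos[of s] by simp

lemma a_eq: "a = (p * w s)\<^sup>2 + (p * w1 s)\<^sup>2 + (c s)\<^sup>2"
proof -
  have k: "\<kappa> s > 0" by (rule kpos)
  have h: "p\<^sup>2 * (p - 1)\<^sup>2 * \<kappa> s powr (2 * (p - 2)) * (deriv \<kappa> s)\<^sup>2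
            + (p - 1)\<^sup>2 * \<kappa> s powr (2 * p) + p\<^sup>2 * \<kappa> s powr (2 * (p - 1)) = a"
    using fi by blast
  have "a = p\<^sup>2 * (p - 1)\<^sup>2 * \<kappa> s powr (2 * (p - 2)) * (K s)\<^sup>2
            + (p - 1)\<^sup>2 * \<kappa> s powr (2 * p) + p\<^sup>2 * \<kappa> s powr (2 * (p - 1))"
    using h[unfolded kfacts(2)] by (rule sym)
  also have "\<dots> = (p * w s)\<^sup>2 + (p * w1 s)\<^sup>2 + (c s)\<^sup>2"
    unfolding kfacts(4) c_def powr_2mult[OF k]
    by (simp add: power_mult_distrib power2_eq_square algebra_simps)
  finally show ?thesis .
qed

lemma JJa: "J0 \<bullet> J0 = a" using JJ[of 0] a_eq[of 0] by simp

definition "D s = a - (p * w s)\<^sup>2"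
lemma Dpos: "D s > 0" unfolding D_def using a_eq[of s] cpos[of s]
  by (smt (verit) zero_le_power2 zero_less_power2)
lemma apos: "a > 0" using Dpos[of 0] unfolding D_def by (smt (verit) zero_le_power2)

definition "e3 = (1 / sqrt a) *\<^sub>R J0"
definition "Z s = p * w s / sqrt a"

lemma e3e3: "e3 \<bullet> e3 = 1" using JJa apos unfolding e3_def by (simp add: power2_eq_square[symmetric])
lemma ge3: "\<gamma> s \<bullet> e3 = Z s" unfolding e3_def Z_def using Jg[of s] by (simp add: inner_commute)
lemma Te3: "T s \<bullet> e3 = p * w1 s / sqrt a" unfolding e3_def using JT[of s] by (simp add: inner_commute)
lemma Ne3: "N s \<bullet> e3 = c s / sqrt a" unfolding e3_def using JN[of s] by (simp add: inner_commute)

lemma Z_der: "DERIV Z s :> p * w1 s / sqrt a"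
  unfolding Z_def[abs_def] by (intro DERIV_cdivide DERIV_cmult w_der')

definition "Q s = 1 - (Z s)\<^sup>2"
lemma Q_eq: "Q s = D s / a" unfolding Q_def D_def Z_def using apos
  by (simp add: field_simps power_divide)
lemma Qpos: "Q s > 0" unfolding Q_eq using Dpos apos by simp

definition "r s = sqrt (Q s)"
lemma rpos: "r s > 0" unfolding r_def using Qpos by simp

lemma Q_der: "DERIV Q s :> - (2 * Z s * (p * w1 s / sqrt a))"
  unfolding Q_def[abs_def] by (auto intro!: derivative_eq_intros Z_der)

lemma ir_der: "\<exists>d. DERIV (\<lambda>s. inverse (r s)) s :> d"
proof -
  have "DERIV r s :> inverse (sqrt (Q s)) / 2 * (- (2 * Z s * (p * w1 s / sqrt a)))"
    unfolding r_def[abs_def] by (rule DERIV_chain2[OF DERIV_real_sqrt[OF Qpos] Q_der])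
  from DERIV_inverse_fun[OF this] rpos[of s] show ?thesis by auto
qed

definition "v s = \<gamma> s - Z s *\<^sub>R e3"
definition "x s = inverse (r s) *\<^sub>R v s"
definition "y s = e3 \<times> x s"

lemma ve3: "v s \<bullet> e3 = 0" unfolding v_def by (simp add: inner_diff_left ge3 e3e3)
lemma vv: "v s \<bullet> v s = Q s" unfolding v_def Q_def
  by (simp add: inner_diff_left inner_diff_right ge3 e3e3 orth inner_commute power2_eq_square)
lemma xe3: "x s \<bullet> e3 = 0" unfolding x_def by (simp add: ve3)
lemma xx: "x s \<bullet> x s = 1" unfolding x_def using vv[of s] rpos[of s] Qpos[of s]
  by (simp add: r_def field_simps)
lemma x_norm: "norm (x s) = 1" using xx by (simp add: norm_eq_sqrt_inner)
lemma e3_norm: "norm e3 = 1" using e3e3 by (simp add: norm_eq_sqrt_inner)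

definition "f s = c s * sqrt a / D s"

end


lemma triple_cyc: "(a::real^3) \<bullet> (b \<times> c) = b \<bullet> (c \<times> a)"
  by (simp add: cross3_simps)

context elastic
begin

lemma v_der: "(v has_vector_derivative (T s - (p * w1 s / sqrt a) *\<^sub>R e3)) (at s)"
proof -
  have "((\<lambda>s. Z s *\<^sub>R e3) has_vector_derivative (Z s *\<^sub>R 0 + (p * w1 s / sqrt a) *\<^sub>R e3)) (at s)"
    by (intro has_vector_derivative_scaleR Z_der has_vector_derivative_const)
  then have "((\<lambda>s. Z s *\<^sub>R e3) has_vector_derivative ((p * w1 s / sqrt a) *\<^sub>R e3)) (at s)" by simp
  from has_vector_derivative_diff[OF g_der[OF arc] this] show ?thesis
    unfolding v_def[abs_def] .
qed

definition "xd s = vector_derivative x (at s)"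

lemma x_der0: "\<exists>d. (x has_vector_derivative
   (inverse (r s) *\<^sub>R (T s - (p * w1 s / sqrt a) *\<^sub>R e3) + d *\<^sub>R v s)) (at s)"
proof -
  obtain d where d: "DERIV (\<lambda>s. inverse (r s)) s :> d" using ir_der by blast
  have "(x has_vector_derivative
   (inverse (r s) *\<^sub>R (T s - (p * w1 s / sqrt a) *\<^sub>R e3) + d *\<^sub>R v s)) (at s)"
    unfolding x_def[abs_def] by (intro has_vector_derivative_scaleR d v_der)
  then show ?thesis by blast
qed

lemma x_der: "(x has_vector_derivative xd s) (at s)"
  using x_der0[of s] unfolding xd_def
  by (metis vector_derivative_at)

lemma v_rx: "v s = r s *\<^sub>R x s" unfolding x_def using rpos[of s] by simp

lemma xd_e3: "xd s \<bullet> e3 = 0"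
proof -
  obtain d where d: "(x has_vector_derivative
   (inverse (r s) *\<^sub>R (T s - (p * w1 s / sqrt a) *\<^sub>R e3) + d *\<^sub>R v s)) (at s)"
    using x_der0 by blast
  then have "xd s = inverse (r s) *\<^sub>R (T s - (p * w1 s / sqrt a) *\<^sub>R e3) + d *\<^sub>R v s"
    using x_der vector_derivative_unique_at by blast
  then show ?thesis by (simp add: inner_add_left inner_diff_left Te3 e3e3 ve3)
qed

lemma xd_x: "x s \<bullet> xd s = 0"
  using inner_const_deriv[of x 1, OF xx x_der] .

lemma Te3x: "T s \<bullet> (e3 \<times> x s) = inverse (r s) * (c s / sqrt a)"
proof -
  have "T s \<bullet> (e3 \<times> x s) = e3 \<bullet> (x s \<times> T s)" using triple_cyc[of "T s" e3 "x s"] by simp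
  also have "x s \<times> T s = inverse (r s) *\<^sub>R (\<gamma> s \<times> T s - Z s *\<^sub>R (e3 \<times> T s))"
    unfolding x_def v_def by (simp add: cross_mult_left Cross3.left_diff_distrib)
  also have "e3 \<bullet> \<dots> = inverse (r s) * (e3 \<bullet> N s)"
    by (simp add: inner_diff_right dot_cross_self normal_def)
  finally show ?thesis using Ne3[of s] by (simp add: inner_commute)
qed

lemma f_pos: "f s > 0" unfolding f_def using cpos Dpos apos by simp

lemma xd_y: "xd s \<bullet> y s = f s"
proof -
  obtain d where d: "(x has_vector_derivative
   (inverse (r s) *\<^sub>R (T s - (p * w1 s / sqrt a) *\<^sub>R e3) + d *\<^sub>R v s)) (at s)"
    using x_der0 by blast
  then have xd: "xd s = inverse (r s) *\<^sub>R (T s - (p * w1 s / sqrt a) *\<^sub>R e3) + d *\<^sub>R v s"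
    using x_der vector_derivative_unique_at by blast
  have vy: "v s \<bullet> y s = 0" unfolding v_rx y_def by (simp add: dot_cross_self)
  have e3y: "e3 \<bullet> y s = 0" unfolding y_def by (simp add: dot_cross_self)
  have "xd s \<bullet> y s = inverse (r s) * (inverse (r s) * (c s / sqrt a))"
    unfolding xd by (simp add: inner_add_left inner_diff_left vy e3y Te3x[unfolded y_def[symmetric]])
  also have "\<dots> = c s / (sqrt a * Q s)"
    using rpos[of s] Qpos[of s] unfolding r_def by (simp add: field_simps)
  also have "\<dots> = f s" unfolding Q_eq f_def using apos Dpos[of s]
    by (simp add: field_simps)
  finally show ?thesis .
qed

lemma xd_eq: "xd s = f s *\<^sub>R y s"
proof -
  have "x s \<bullet> e3 = 0" by (rule xe3)
  then have "e3 \<bullet> x s = 0" by (simp add: inner_commute)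
  from frame_decomp[OF e3_norm x_norm this, of "xd s"]
  show ?thesis using xd_e3[of s] xd_x[of s] xd_y[of s]
    by (simp add: inner_commute y_def)
qed

lemma e3x: "e3 \<bullet> x s = 0" using xe3[of s] by (simp add: inner_commute)

lemma y_der: "(y has_vector_derivative (- f s *\<^sub>R x s)) (at s)"
proof -
  have bb: "bounded_bilinear cross3" using bilinear_cross bilinear_conv_bounded_bilinear by blast
  have "(y has_vector_derivative (e3 \<times> xd s + 0 \<times> x s)) (at s)"
    unfolding y_def[abs_def]
    using bounded_bilinear.has_vector_derivative[OF bb has_vector_derivative_const x_der] .
  moreover have "e3 \<times> xd s + 0 \<times> x s = - f s *\<^sub>R x s"
    unfolding xd_eq y_def using Lagrange[of e3 e3 "x s"] e3e3
    by (simp add: cross_mult_right e3x)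
  ultimately show ?thesis by simp
qed

lemma y_norm: "y s \<bullet> x s = 0" unfolding y_def by (simp add: dot_cross_self)

end


context elastic
begin

lemma c_der: "DERIV c s :> (1 - p) * (p * \<kappa> s powr (p - 1) * K s)"
  unfolding c_def[abs_def] by (intro DERIV_cmult kfacts(5))

lemma f_cont: "isCont f s"
proof -
  have "isCont c s" using c_der DERIV_isCont by blast
  moreover have "isCont w s" using w_der' DERIV_isCont by blast
  ultimately show ?thesis unfolding f_def[abs_def] D_def[abs_def]
    using Dpos[of s] kfacts(3)[of s] kpos[of s] unfolding D_def by (intro continuous_intros) auto
qed

definition "Phi = (SOME F. \<forall>x. (F has_vector_derivative f x) (at x))"

lemma Phi_der: "(Phi has_vector_derivative f s) (at s)"
proof -
  have "\<exists>F. \<forall>x::real. -\<infinity> < ereal x \<longrightarrow> ereal x < \<infinity> \<longrightarrow> (F has_vector_derivative f x) (at x)"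
    by (rule einterval_antiderivative) (auto intro: f_cont)
  then have "\<exists>F. \<forall>x. (F has_vector_derivative f x) (at x)" by auto
  from someI_ex[OF this] show ?thesis unfolding Phi_def by blast
qed

definition "theta s = Phi s - Phi 0"

lemma theta_der: "DERIV theta s :> f s"
proof -
  have "DERIV Phi s :> f s" using Phi_der has_real_derivative_iff_has_vector_derivative by blast
  then show ?thesis unfolding theta_def[abs_def] by (auto intro!: derivative_eq_intros)
qed

lemma theta0: "theta 0 = 0" unfolding theta_def by simp

definition "Fv s = cos (theta s) *\<^sub>R x s - sin (theta s) *\<^sub>R y s"
definition "Gv s = sin (theta s) *\<^sub>R x s + cos (theta s) *\<^sub>R y s"

lemma cos_der: "DERIV (\<lambda>s. cos (theta s)) s :> - sin (theta s) * f s"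
  by (auto intro!: derivative_eq_intros theta_der)
lemma sin_der: "DERIV (\<lambda>s. sin (theta s)) s :> cos (theta s) * f s"
  by (auto intro!: derivative_eq_intros theta_der)

lemma const_vec:
  fixes h :: "real \<Rightarrow> real^3"
  assumes "\<And>s. (h has_vector_derivative 0) (at s)"
  shows "h s = h 0"
proof -
  have d: "(h has_derivative (\<lambda>_. 0)) (at x)" for x
    using assms[of x] unfolding has_vector_derivative_def by simp
  have "\<exists>c. \<forall>x\<in>UNIV. h x = c"
    by (rule has_derivative_zero_constant[OF convex_UNIV]) (rule d)
  then show ?thesis by auto
qed

lemma Fv_der: "(Fv has_vector_derivative 0) (at s)"
proof -
  have "(Fv has_vector_derivative
     (cos (theta s) *\<^sub>R xd s + (- sin (theta s) * f s) *\<^sub>R x s)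
     - (sin (theta s) *\<^sub>R (- f s *\<^sub>R x s) + (cos (theta s) * f s) *\<^sub>R y s)) (at s)"
    unfolding Fv_def[abs_def]
    by (intro has_vector_derivative_diff has_vector_derivative_scaleR cos_der sin_der x_der y_der)
  then show ?thesis unfolding xd_eq by (simp add: algebra_simps)
qed

lemma Gv_der: "(Gv has_vector_derivative 0) (at s)"
proof -
  have "(Gv has_vector_derivative
     (sin (theta s) *\<^sub>R xd s + (cos (theta s) * f s) *\<^sub>R x s)
     + (cos (theta s) *\<^sub>R (- f s *\<^sub>R x s) + (- sin (theta s) * f s) *\<^sub>R y s)) (at s)"
    unfolding Gv_def[abs_def]
    by (intro has_vector_derivative_add has_vector_derivative_scaleR cos_der sin_der x_der y_der)
  then show ?thesis unfolding xd_eq by (simp add: algebra_simps)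
qed

lemma x_rep: "x s = cos (theta s) *\<^sub>R x 0 + sin (theta s) *\<^sub>R y 0"
proof -
  have F: "Fv s = x 0" using const_vec[OF Fv_der, of s] unfolding Fv_def theta0 by simp
  have G: "Gv s = y 0" using const_vec[OF Gv_der, of s] unfolding Gv_def theta0 by simp
  have "cos (theta s) *\<^sub>R Fv s + sin (theta s) *\<^sub>R Gv s = (cos (theta s) * cos (theta s)) *\<^sub>R x s + (sin (theta s) * sin (theta s)) *\<^sub>R x s"
    unfolding Fv_def Gv_def by (simp add: algebra_simps)
  also have "\<dots> = (cos (theta s) * cos (theta s) + sin (theta s) * sin (theta s)) *\<^sub>R x s"
    by (simp only: scaleR_add_left)
  also have "\<dots> = x s"
    by (simp add: power2_eq_square[symmetric])
  finally show ?thesis using F G by simp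
qed

lemma g_rep: "\<gamma> s = r s *\<^sub>R x s + Z s *\<^sub>R e3"
  using v_rx[of s] unfolding v_def by (simp add: algebra_simps)

end


lemma per_nat:
  assumes "minimal_period g \<rho>"
  shows "g (s + real n * \<rho>) = g s"
proof (induction n arbitrary: s)
  case 0 then show ?case by simp
next
  case (Suc n)
  have "g (s + real (Suc n) * \<rho>) = g ((s + real n * \<rho>) + \<rho>)" by (simp add: algebra_simps)
  also have "\<dots> = g (s + real n * \<rho>)" using assms unfolding minimal_period_def by blast
  finally show ?case using Suc by simp
qed

lemma per_mult:
  assumes mp: "minimal_period g \<rho>" and L: "0 < L" and per: "\<And>s. g (s + L) = g s"
  shows "\<exists>n::nat. 0 < n \<and> L = real n * \<rho>"
proof -
  have rho: "\<rho> > 0" using mp unfolding minimal_period_def by blast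
  define k where "k = nat \<lfloor>L / \<rho>\<rfloor>"
  have fl0: "\<lfloor>L / \<rho>\<rfloor> \<ge> 0" using L rho by simp
  have kk: "real k = of_int \<lfloor>L / \<rho>\<rfloor>" unfolding k_def using fl0 by simp
  have k1: "real k \<le> L / \<rho>" "L / \<rho> < real k + 1" unfolding kk by linarith+
  define L' where "L' = L - real k * \<rho>"
  have L'0: "0 \<le> L'" unfolding L'_def using k1(1) rho by (simp add: field_simps)
  have L'1: "L' < \<rho>" unfolding L'_def using k1(2) rho by (simp add: field_simps)
  have pL': "g (s + L') = g s" for s
  proof -
    have "g (s + L') = g ((s + L') + real k * \<rho>)" using per_nat[OF mp, of "s + L'" k] by simp
    also have "(s + L') + real k * \<rho> = s + L" unfolding L'_def by simp
    finally show ?thesis using per by simp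
  qed
  have "L' = 0"
  proof (rule ccontr)
    assume "L' \<noteq> 0"
    then have "0 < L'" using L'0 by simp
    then show False using L'1 pL' mp unfolding minimal_period_def by blast
  qed
  then have "L = real k * \<rho>" unfolding L'_def by simp
  moreover have "0 < k" using L \<open>L = real k * \<rho>\<close> by (cases k) auto
  ultimately show ?thesis by blast
qed

context elastic
begin

lemma per_funs:
  assumes "\<And>s. \<kappa> (s + L) = \<kappa> s"
  shows "f (s + L) = f s" "Z (s + L) = Z s" "r (s + L) = r s"
  using assms by (simp_all add: f_def c_def D_def Z_def r_def Q_def)

lemma theta_shift:
  assumes "\<And>s. \<kappa> (s + L) = \<kappa> s"
  shows "theta (s + L) = theta s + theta L"
proof -
  have "\<forall>t. DERIV (\<lambda>s. theta (s + L) - theta s) t :> 0"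
  proof
    fix t
    have "DERIV (\<lambda>s. theta (s + L)) t :> f (t + L)"
      using theta_der[of "t + L"] DERIV_shift by blast
    then have "DERIV (\<lambda>s. theta (s + L) - theta s) t :> f (t + L) - f t"
      by (intro DERIV_diff theta_der)
    then show "DERIV (\<lambda>s. theta (s + L) - theta s) t :> 0" using per_funs(1)[OF assms] by simp
  qed
  then have "theta (s + L) - theta s = theta (0 + L) - theta 0" by (rule DERIV_isconst_all)
  then show ?thesis using theta0 by simp
qed

lemma theta_nat:
  assumes "\<And>s. \<kappa> (s + L) = \<kappa> s"
  shows "theta (s + real n * L) = theta s + real n * theta L"
proof (induction n arbitrary: s)
  case 0 then show ?case by simp
next
  case (Suc n)
  have "theta (s + real (Suc n) * L) = theta ((s + real n * L) + L)" by (simp add: algebra_simps)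
  also have "\<dots> = theta (s + real n * L) + theta L" by (rule theta_shift[OF assms])
  finally show ?case using Suc by (simp add: algebra_simps)
qed

lemma theta_int:
  assumes "0 < \<rho>"
  shows "theta \<rho> = integral {0..\<rho>} f"
proof -
  have "(f has_integral (theta \<rho> - theta 0)) {0..\<rho>}"
    by (rule fundamental_theorem_of_calculus)
      (use assms theta_der in \<open>auto simp: has_real_derivative_iff_has_vector_derivative intro: has_vector_derivative_at_within\<close>)
  then show ?thesis using theta0 by (simp add: integral_unique)
qed

lemma f_alt: "f s = (1 - p) * sqrt a * (\<kappa> s powr (2 - p) / (a * \<kappa> s powr (2 * (1 - p)) - p\<^sup>2))"
proof -
  have k: "\<kappa> s > 0" by (rule kpos)
  define E where "E = \<kappa> s powr (2 * (1 - p))"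
  have Epos: "E > 0" unfolding E_def using k by simp
  have e1: "\<kappa> s powr (2 - p) = \<kappa> s powr p * E" unfolding E_def using k
    by (simp add: powr_add[symmetric] algebra_simps)
  have e2: "(p * w s)\<^sup>2 * E = p\<^sup>2" unfolding E_def using k
    by (simp add: power_mult_distrib powr_2mult[symmetric] powr_add[symmetric] algebra_simps)
  have "a * E - p\<^sup>2 = E * D s" unfolding D_def using e2 by (simp add: algebra_simps)
  then have "\<kappa> s powr (2 - p) / (a * \<kappa> s powr (2 * (1 - p)) - p\<^sup>2) = \<kappa> s powr p / D s"
    unfolding E_def[symmetric] e1 using Epos by simp
  then show ?thesis unfolding f_def c_def by simp
qed

lemma Lambda_theta:
  assumes "0 < \<rho>"
  shows "Lambda_p p a \<kappa> \<rho> = theta \<rho>"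
proof -
  have "integral {0..\<rho>} f = integral {0..\<rho>} (\<lambda>s. (1 - p) * sqrt a * (\<kappa> s powr (2 - p) / (a * \<kappa> s powr (2 * (1 - p)) - p\<^sup>2)))"
    by (rule integral_cong) (rule f_alt)
  then show ?thesis unfolding theta_int[OF assms] Lambda_p_def integral_mult_right by simp
qed

end


lemma closed_kper:
  assumes arc: "arclength_sphere_curve \<gamma>" and per: "\<And>s. \<gamma> (s + L) = \<gamma> s"
  shows "geod_curv \<gamma> (s + L) = geod_curv \<gamma> s"
proof -
  have gd: "\<And>s. \<gamma> differentiable (at s)" and Td: "\<And>s. tangent \<gamma> differentiable (at s)"
    using arc unfolding arclength_sphere_curve_def by auto
  have Tp: "tangent \<gamma> (s + L) = tangent \<gamma> s" for s
    unfolding tangent_def using periodic_vd[OF per gd] .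
  have Ap: "vector_derivative (tangent \<gamma>) (at (s + L)) = vector_derivative (tangent \<gamma>) (at s)" for s
    using periodic_vd[OF Tp Td] .
  show ?thesis unfolding geod_curv_def cov_accel_def normal_def Tp Ap per ..
qed

theorem mainTheorem6:
  fixes p a \<rho> :: real and \<gamma> :: "real \<Rightarrow> real^3"
  assumes "0 < p" "p < 1"
    and "a > p powr p * (1 - p) powr (1 - p)"
    and "p_elastic p \<gamma>"
    and "\<not> (\<exists>c. \<forall>s. geod_curv \<gamma> s = c)"
    and "\<forall>s. p\<^sup>2 * (p - 1)\<^sup>2 * geod_curv \<gamma> s powr (2 * (p - 2)) * (deriv (geod_curv \<gamma>) s)\<^sup>2
            + (p - 1)\<^sup>2 * geod_curv \<gamma> s powr (2 * p) + p\<^sup>2 * geod_curv \<gamma> s powr (2 * (p - 1)) = a"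
    and "minimal_period (geod_curv \<gamma>) \<rho>"
  shows "closed_curve \<gamma> \<longleftrightarrow>
         (\<exists>q\<in>\<rat>. Lambda_p p a (geod_curv \<gamma>) \<rho> = 2 * pi * q)"
proof -
  interpret elastic p a \<gamma> by unfold_locales (use assms in auto)
  have mp: "minimal_period \<kappa> \<rho>" by (rule assms(7))
  have rho: "0 < \<rho>" using mp unfolding minimal_period_def by blast
  have kper: "\<And>s. \<kappa> (s + \<rho>) = \<kappa> s" using mp unfolding minimal_period_def by blast
  have Lam: "Lambda_p p a \<kappa> \<rho> = theta \<rho>" by (rule Lambda_theta[OF rho])
  have x00: "x 0 \<bullet> x 0 = 1" by (rule xx)
  have y0x0: "y 0 \<bullet> x 0 = 0" by (rule y_norm)
  show ?thesis
  proof
    assume "closed_curve \<gamma>"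
    then obtain L where L: "L > 0" and per: "\<And>s. \<gamma> (s + L) = \<gamma> s"
      unfolding closed_curve_def by blast
    have kL: "\<And>s. \<kappa> (s + L) = \<kappa> s" using closed_kper[OF arc per] .
    obtain n :: nat where n: "0 < n" "L = real n * \<rho>" using per_mult[OF mp L kL] by blast
    have "\<gamma> (0 + L) = \<gamma> 0" by (rule per)
    then have "r (0 + L) *\<^sub>R x (0 + L) + Z (0 + L) *\<^sub>R e3 = r 0 *\<^sub>R x 0 + Z 0 *\<^sub>R e3"
      using g_rep by metis
    then have "r 0 *\<^sub>R x L = r 0 *\<^sub>R x 0" using per_funs(2,3)[OF kL, of 0] by simp
    then have xL: "x L = x 0" using rpos[of 0] by simp
    have thL: "theta L = real n * theta \<rho>" using theta_nat[OF kper, of 0 n] n(2) theta0 by simp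
    have "x L \<bullet> x 0 = cos (theta L)"
      using x_rep[of L] x00 y0x0 by (simp add: inner_add_left)
    then have "cos (theta L) = 1" using xL x00 by simp
    then obtain k :: int where k: "theta L = real_of_int k * 2 * pi" using cos_one_2pi_int by blast
    have "theta \<rho> = 2 * pi * (of_int k / of_nat n)"
      using k thL n(1) by (simp add: field_simps)
    moreover have "(of_int k / of_nat n :: real) \<in> \<rat>" by simp
    ultimately show "\<exists>q\<in>\<rat>. Lambda_p p a \<kappa> \<rho> = 2 * pi * q" using Lam
      by (intro bexI[of _ "real_of_int k / real n"]) auto
  next
    assume "\<exists>q\<in>\<rat>. Lambda_p p a \<kappa> \<rho> = 2 * pi * q"
    then obtain q where q: "q \<in> \<rat>" "theta \<rho> = 2 * pi * q" using Lam by auto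
    obtain m b :: int where mb: "b > 0" "q = of_int m / of_int b" using Rats_cases'[OF q(1)] by metis
    define n where "n = nat b"
    have nb: "real n = of_int b" unfolding n_def using mb(1) by simp
    define L where "L = real n * \<rho>"
    have Lpos: "L > 0" unfolding L_def using nb mb(1) rho by simp
    have kL: "\<And>s. \<kappa> (s + L) = \<kappa> s" unfolding L_def using per_nat[OF mp] by blast
    have "\<gamma> (s + L) = \<gamma> s" for s
    proof -
      have "theta (s + L) = theta s + real n * theta \<rho>"
        unfolding L_def by (rule theta_nat[OF kper])
      then have th: "theta (s + L) = theta s + 2 * pi * of_int m"
        unfolding q(2) nb mb(2) using mb(1) by simp
      have c: "cos (theta (s + L)) = cos (theta s)" unfolding th cos_add by simp
      have s: "sin (theta (s + L)) = sin (theta s)" unfolding th sin_add by simp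
      have "x (s + L) = x s" using x_rep[of "s + L"] x_rep[of s] c s by simp
      then show ?thesis using g_rep[of "s + L"] g_rep[of s] per_funs(2,3)[OF kL, of s] by simp
    qed
    then show "closed_curve \<gamma>" unfolding closed_curve_def using Lpos by blast
  qed
qed


end
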